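(* Let $G\in L^\infty_{q\times p}$ be such that its Hankel operator $H$ satisfies (C1) $H$ has finite rank, and (C2) no maximizing vector of $H$ belongs to $SH^2_p$ and the linear span of the maximizing vectors of $H$ has dimension $p$. Let $\mathcal M_0$ be a finite dimensional subspace of $H^2_p$ with $S^*\mathcal M_0\subset\mathcal M_0$, let $P_0$ be the orthogonal projection onto $\mathcal M_0$, and put $\mathcal X_0=W\mathcal M_0^\perp\subset\mathcal X$. Then $\mathcal X_0$ is $Z$-invariant and, with $Z_0=Z|_{\mathcal X_0}:\mathcal X_0\to\mathcal X_0$, $\Pi_{\mathcal X_0}:\mathcal X\to\mathcal X_0$ the orthogonal projection, and $W_0=\Pi_{\mathcal X_0}W:H^2_p\to\mathcal X_0$, we have $r_{\mathrm{spec}}(Z_0)\le r_{\mathrm{spec}}(Z)$ and $Z^kW(I-P_0)=\Pi_{\mathcal X_0}^*Z_0^kW_0(I-P_0)$ for $k=0,1,2,\dots$.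
   Context: $H:H^2_p\to K^2_q$, $Hf=P_-(Gf)$, with $P_-$ the orthogonal projection of $L^2_q$ onto $K^2_q=L^2_q\ominus H^2_q$; $S$ forward shift on $H^2_p$; $V$ multiplication by $e^{it}$ on $L^2_q$, $V_-=P_-V|_{K^2_q}$; $\mathcal X=\overline{\operatorname{Im}H}=\operatorname{Im}H$; $Z=V_-|_{\mathcal X}:\mathcal X\to\mathcal X$; $W:H^2_p\to\mathcal X$, $Wf=Hf$. $\Pi_{\mathcal X_0}^*$ is the inclusion of $\mathcal X_0$ into $\mathcal X$. A maximizing vector of $H$ is a nonzero $h$ with $\|Hh\|=\|H\|\,\|h\|$. *)

theory Defs
  imports "HOL-Analysis.Analysis" "HOL-Library.Function_Algebras"
begin

text \<open>Model: a vector-valued L^2 function on the unit circle is represented by its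
 sequence of Fourier coefficients  f :: int => complex^'n  (square summable).
 H^2 = coefficients vanish for negative indices, K^2 = L^2 minus H^2 = coefficients
 vanish for nonnegative indices. Multiplication by e^{it} is the shift n |-> n+1.\<close>

definition vinner :: "complex^'n \<Rightarrow> complex^'n \<Rightarrow> complex" where
  "vinner x y = (\<Sum>i\<in>UNIV. x $ i * cnj (y $ i))"

definition cscale :: "complex \<Rightarrow> (int \<Rightarrow> complex^'n) \<Rightarrow> (int \<Rightarrow> complex^'n)" where
  "cscale c f = (\<lambda>k. c *s f k)"

definition L2 :: "(int \<Rightarrow> complex^'n) set" where
  "L2 = {f. (\<lambda>k. (norm (f k))\<^sup>2) summable_on UNIV}"

definition H2 :: "(int \<Rightarrow> complex^'n) set" where
  "H2 = {f \<in> L2. \<forall>k<0. f k = 0}"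

definition K2 :: "(int \<Rightarrow> complex^'n) set" where
  "K2 = {f \<in> L2. \<forall>k\<ge>0. f k = 0}"

definition l2norm :: "(int \<Rightarrow> complex^'n) \<Rightarrow> real" where
  "l2norm f = sqrt (infsum (\<lambda>k. (norm (f k))\<^sup>2) UNIV)"

definition l2inner :: "(int \<Rightarrow> complex^'n) \<Rightarrow> (int \<Rightarrow> complex^'n) \<Rightarrow> complex" where
  "l2inner f g = infsum (\<lambda>k. vinner (f k) (g k)) UNIV"

definition Linf :: "(real \<Rightarrow> complex^'p^'q) \<Rightarrow> bool" where
  "Linf G \<longleftrightarrow> set_borel_measurable lborel {0..2*pi} G \<and>
     (\<exists>C. AE t in lborel. t \<in> {0..2*pi} \<longrightarrow> norm (G t) \<le> C)"

definition fourier_coeff :: "(real \<Rightarrow> complex^'p^'q) \<Rightarrow> int \<Rightarrow> complex^'p^'q" where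
  "fourier_coeff G n = (\<chi> i j. integral {0..2*pi}
       (\<lambda>t. cis (- (real_of_int n * t)) * (G t $ i $ j)) / complex_of_real (2*pi))"

definition mult_op :: "(real \<Rightarrow> complex^'p^'q) \<Rightarrow> (int \<Rightarrow> complex^'p) \<Rightarrow> (int \<Rightarrow> complex^'q)" where
  "mult_op G f = (\<lambda>m. infsum (\<lambda>n. fourier_coeff G (m - n) *v f n) UNIV)"

definition Pminus :: "(int \<Rightarrow> complex^'n) \<Rightarrow> (int \<Rightarrow> complex^'n)" where
  "Pminus f = (\<lambda>k. if k < 0 then f k else 0)"

definition hankel :: "(real \<Rightarrow> complex^'p^'q) \<Rightarrow> (int \<Rightarrow> complex^'p) \<Rightarrow> (int \<Rightarrow> complex^'q)" where
  "hankel G f = Pminus (mult_op G f)"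

definition hankel_norm :: "(real \<Rightarrow> complex^'p^'q) \<Rightarrow> real" where
  "hankel_norm G = Sup {l2norm (hankel G f) | f. f \<in> H2 \<and> l2norm f \<le> 1}"

definition maximizing_vector :: "(real \<Rightarrow> complex^'p^'q) \<Rightarrow> (int \<Rightarrow> complex^'p) \<Rightarrow> bool" where
  "maximizing_vector G h \<longleftrightarrow> h \<in> H2 \<and> h \<noteq> 0 \<and>
      l2norm (hankel G h) = hankel_norm G * l2norm h"

definition shiftS :: "(int \<Rightarrow> complex^'n) \<Rightarrow> (int \<Rightarrow> complex^'n)" where
  "shiftS f = (\<lambda>k. f (k - 1))"

definition shiftS_adj :: "(int \<Rightarrow> complex^'n) \<Rightarrow> (int \<Rightarrow> complex^'n)" where
  "shiftS_adj f = (\<lambda>k. if k < 0 then 0 else f (k + 1))"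

definition multV :: "(int \<Rightarrow> complex^'n) \<Rightarrow> (int \<Rightarrow> complex^'n)" where
  "multV f = (\<lambda>k. f (k - 1))"

definition Vminus :: "(int \<Rightarrow> complex^'n) \<Rightarrow> (int \<Rightarrow> complex^'n)" where
  "Vminus g = Pminus (multV g)"

abbreviation csubspace :: "(int \<Rightarrow> complex^'n) set \<Rightarrow> bool" where
  "csubspace S \<equiv> module.subspace cscale S"

abbreviation cspan :: "(int \<Rightarrow> complex^'n) set \<Rightarrow> (int \<Rightarrow> complex^'n) set" where
  "cspan S \<equiv> module.span cscale S"

abbreviation cdim :: "(int \<Rightarrow> complex^'n) set \<Rightarrow> nat" where
  "cdim S \<equiv> vector_space.dim cscale S"

definition finite_rank :: "(real \<Rightarrow> complex^'p^'q) \<Rightarrow> bool" where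
  "finite_rank G \<longleftrightarrow> (\<exists>B. finite B \<and> hankel G ` H2 \<subseteq> cspan B)"

definition orth_proj :: "(int \<Rightarrow> complex^'n) set \<Rightarrow> (int \<Rightarrow> complex^'n) \<Rightarrow> (int \<Rightarrow> complex^'n)" where
  "orth_proj M f = (THE m. m \<in> M \<and> (\<forall>y\<in>M. l2inner (f - m) y = 0))"

definition orth_compl_in :: "(int \<Rightarrow> complex^'n) set \<Rightarrow> (int \<Rightarrow> complex^'n) set \<Rightarrow> (int \<Rightarrow> complex^'n) set" where
  "orth_compl_in A M = {f \<in> A. \<forall>m\<in>M. l2inner f m = 0}"

text \<open>Spectral radius of an operator T on a finite dimensional space X: the largest
 modulus of an eigenvalue (0 if X = {0}).\<close>
definition spec_radius :: "((int \<Rightarrow> complex^'n) \<Rightarrow> (int \<Rightarrow> complex^'n)) \<Rightarrow> (int \<Rightarrow> complex^'n) set \<Rightarrow> real" where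
  "spec_radius T X = Sup (insert 0 {cmod c | c. \<exists>x\<in>X. x \<noteq> 0 \<and> T x = cscale c x})"

end

theory Submission
  imports Defs
begin


lemma cscale_apply: "cscale c f k = c *s f k"
  by (simp add: cscale_def)

interpretation cs: module "cscale :: complex \<Rightarrow> (int \<Rightarrow> complex^'n) \<Rightarrow> _"
  by unfold_locales (auto simp: cscale_def fun_eq_iff vec_eq_iff algebra_simps)

lemma normsq_vec: "(norm (x :: complex^'n))\<^sup>2 = (\<Sum>i\<in>UNIV. (cmod (x $ i))\<^sup>2)"
  by (simp add: norm_vec_def L2_set_def sum_nonneg)

lemma vinner_self: "vinner x x = complex_of_real ((norm x)\<^sup>2)"
  unfolding vinner_def normsq_vec of_real_sum complex_norm_square by simp

lemma vinner_bound: "cmod (vinner x y) \<le> ((norm x)\<^sup>2 + (norm y)\<^sup>2) / 2"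
proof -
  have "cmod (vinner x y) \<le> (\<Sum>i\<in>UNIV. cmod (x $ i) * cmod (y $ i))"
    unfolding vinner_def by (rule order_trans[OF norm_sum]) (simp add: norm_mult)
  also have "\<dots> \<le> (\<Sum>i\<in>UNIV. ((cmod (x $ i))\<^sup>2 + (cmod (y $ i))\<^sup>2) / 2)"
  proof (rule sum_mono)
    fix i
    have "0 \<le> (cmod (x $ i) - cmod (y $ i))\<^sup>2" by simp
    then show "cmod (x $ i) * cmod (y $ i) \<le> ((cmod (x $ i))\<^sup>2 + (cmod (y $ i))\<^sup>2) / 2"
      by (simp add: power2_eq_square algebra_simps)
  qed
  also have "\<dots> = ((norm x)\<^sup>2 + (norm y)\<^sup>2) / 2"
    by (simp add: normsq_vec sum.distrib flip: sum_divide_distrib)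
  finally show ?thesis .
qed

lemma vinner_diff_left: "vinner (x - y) z = vinner x z - vinner y z"
  by (simp add: vinner_def algebra_simps sum_subtractf)
lemma vinner_add_left: "vinner (x + y) z = vinner x z + vinner y z"
  by (simp add: vinner_def algebra_simps sum.distrib)
lemma vinner_scale_left: "vinner (c *s x) z = c * vinner x z"
  by (simp add: vinner_def algebra_simps sum_distrib_left)
lemma vinner_sym: "vinner y x = cnj (vinner x y)"
  by (simp add: vinner_def mult.commute)
lemma vinner_zero_right [simp]: "vinner x 0 = 0"
  by (simp add: vinner_def)
lemma vinner_zero_left [simp]: "vinner 0 x = 0"
  by (simp add: vinner_def)

lemma norm_add_sq: "(norm (x + y :: 'a::real_normed_vector))\<^sup>2 \<le> 2 * (norm x)\<^sup>2 + 2 * (norm y)\<^sup>2"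
proof -
  have "(norm (x + y))\<^sup>2 \<le> (norm x + norm y)\<^sup>2"
    by (simp add: norm_triangle_ineq power_mono)
  also have "\<dots> \<le> 2 * (norm x)\<^sup>2 + 2 * (norm y)\<^sup>2"
    using sum_squares_bound[of "norm x" "norm y"] by (simp add: power2_eq_square algebra_simps)
  finally show ?thesis .
qed

lemma L2_zero [simp]: "0 \<in> L2"
  by (simp add: L2_def)

lemma L2_add: assumes "f \<in> L2" "g \<in> L2" shows "f + g \<in> L2"
proof -
  have s: "(\<lambda>k. 2 * (norm (f k))\<^sup>2 + 2 * (norm (g k))\<^sup>2) summable_on UNIV"
    using assms unfolding L2_def mem_Collect_eq
    by (intro summable_on_add summable_on_cmult_right)
  have "(\<lambda>k. (norm ((f + g) k))\<^sup>2) summable_on UNIV"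
    by (rule summable_on_comparison_test[OF s]) (simp_all only: plus_fun_apply norm_add_sq zero_le_power2)
  then show ?thesis unfolding L2_def by simp
qed

lemma L2_scale: assumes "f \<in> L2" shows "cscale c f \<in> L2"
proof -
  have "(\<lambda>k. (cmod c)\<^sup>2 * (norm (f k))\<^sup>2) summable_on UNIV"
    using assms unfolding L2_def mem_Collect_eq by (intro summable_on_cmult_right)
  moreover have nsq: "(norm (c *s x))\<^sup>2 = (cmod c)\<^sup>2 * (norm x)\<^sup>2" for x :: "complex^'n"
    by (simp add: normsq_vec norm_mult power_mult_distrib sum_distrib_left)
  then have "(\<lambda>k. (norm (cscale c f k))\<^sup>2) = (\<lambda>k. (cmod c)\<^sup>2 * (norm (f k))\<^sup>2)"
    unfolding cscale_apply by (intro ext) (rule nsq)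
  ultimately show ?thesis unfolding L2_def by (simp only: mem_Collect_eq)
qed

lemma L2_uminus: "f \<in> L2 \<Longrightarrow> - f \<in> L2"
  by (simp add: L2_def)

lemma L2_diff: "f \<in> L2 \<Longrightarrow> g \<in> L2 \<Longrightarrow> f - g \<in> L2"
  using L2_add[of f "- g"] L2_uminus[of g] by simp

lemma L2_subspace: "csubspace L2"
  unfolding cs.subspace_def using L2_add L2_scale by auto

lemma vinner_summable:
  assumes "f \<in> L2" "g \<in> L2"
  shows "(\<lambda>k. vinner (f k) (g k)) summable_on UNIV"
proof -
  have "(\<lambda>k. ((norm (f k))\<^sup>2 + (norm (g k))\<^sup>2) / 2) summable_on UNIV"
    using assms unfolding L2_def mem_Collect_eq divide_inverse
    by (intro summable_on_add summable_on_cmult_left)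
  then have "(\<lambda>k. norm (vinner (f k) (g k))) summable_on UNIV"
    by (rule Infinite_Sum.abs_summable_on_comparison_test') (rule vinner_bound)
  then show ?thesis by (rule abs_summable_summable)
qed

lemma infsum_diff':
  fixes f g :: "'a \<Rightarrow> 'b::{topological_ab_group_add, t2_space}"
  assumes "f summable_on A" "g summable_on A"
  shows "infsum (\<lambda>x. f x - g x) A = infsum f A - infsum g A"
proof -
  have "infsum (\<lambda>x. f x + (- g x)) A = infsum f A + infsum (\<lambda>x. - g x) A"
    by (rule infsum_add) (use assms in \<open>simp_all add: summable_on_uminus\<close>)
  then show ?thesis by (simp add: infsum_uminus)
qed

lemma l2inner_diff_left:
  assumes "f \<in> L2" "g \<in> L2" "h \<in> L2"
  shows "l2inner (f - g) h = l2inner f h - l2inner g h"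
  unfolding l2inner_def
  using infsum_diff'[OF vinner_summable[OF assms(1,3)] vinner_summable[OF assms(2,3)]]
  by (simp add: vinner_diff_left)

lemma l2inner_add_left:
  assumes "f \<in> L2" "g \<in> L2" "h \<in> L2"
  shows "l2inner (f + g) h = l2inner f h + l2inner g h"
  unfolding l2inner_def
  using infsum_add[OF vinner_summable[OF assms(1,3)] vinner_summable[OF assms(2,3)]]
  by (simp add: vinner_add_left)

lemma l2inner_scale_left: "l2inner (cscale c f) h = c * l2inner f h"
  unfolding l2inner_def by (simp add: cscale_apply vinner_scale_left infsum_cmult_right')

lemma l2inner_sym: "l2inner g f = cnj (l2inner f g)"
  unfolding l2inner_def by (subst vinner_sym) (simp add: infsum_cnj)

lemma l2inner_zero_right [simp]: "l2inner f 0 = 0"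
  by (simp add: l2inner_def)

lemma l2inner_diff_right:
  assumes "f \<in> L2" "g \<in> L2" "h \<in> L2"
  shows "l2inner h (f - g) = l2inner h f - l2inner h g"
  using l2inner_diff_left[OF assms] by (metis complex_cnj_diff l2inner_sym)

lemma l2inner_add_right:
  assumes "f \<in> L2" "g \<in> L2" "h \<in> L2"
  shows "l2inner h (f + g) = l2inner h f + l2inner h g"
  using l2inner_add_left[OF assms] by (metis complex_cnj_add l2inner_sym)

lemma l2inner_scale_right: "l2inner h (cscale c f) = cnj c * l2inner h f"
  by (metis complex_cnj_cnj complex_cnj_mult l2inner_scale_left l2inner_sym)

lemma l2inner_self_zero:
  assumes "f \<in> L2" "l2inner f f = 0"
  shows "f = 0"
proof -
  have s: "(\<lambda>k. (norm (f k))\<^sup>2) summable_on UNIV" using assms by (simp add: L2_def)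
  have "l2inner f f = infsum (\<lambda>k. complex_of_real ((norm (f k))\<^sup>2)) UNIV"
    by (simp add: l2inner_def vinner_self)
  also have "\<dots> = complex_of_real (infsum (\<lambda>k. (norm (f k))\<^sup>2) UNIV)"
    by (rule infsumI, rule has_sum_bounded_linear[OF bounded_linear_of_real has_sum_infsum[OF s]])
  finally have "infsum (\<lambda>k. (norm (f k))\<^sup>2) UNIV = 0" using assms by simp
  then have "(norm (f k))\<^sup>2 = 0" for k
    by (intro nonneg_infsum_le_0D[OF _ s]) auto
  then show ?thesis by (auto simp: fun_eq_iff)
qed

lemma orth_proj_eq:
  assumes A: "A \<subseteq> L2" "\<And>x y. x \<in> A \<Longrightarrow> y \<in> A \<Longrightarrow> x - y \<in> A"
    and f: "f \<in> L2" and m: "m \<in> A" "\<forall>y\<in>A. l2inner (f - m) y = 0"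
  shows "orth_proj A f = m"
  unfolding orth_proj_def
proof (rule the_equality)
  show "m \<in> A \<and> (\<forall>y\<in>A. l2inner (f - m) y = 0)" using m by blast
next
  fix m' assume m': "m' \<in> A \<and> (\<forall>y\<in>A. l2inner (f - m') y = 0)"
  have d: "m - m' \<in> A" using A m m' by blast
  have L: "m \<in> L2" "m' \<in> L2" "m - m' \<in> L2" using A m m' d by auto
  have "m - m' = (f - m') - (f - m)" by simp
  then have "l2inner (m - m') (m - m') = l2inner (f - m') (m - m') - l2inner (f - m) (m - m')"
    using l2inner_diff_left[of "f - m'" "f - m" "m - m'"] L f by (simp add: L2_diff)
  also have "\<dots> = 0" using m m' d by simp
  finally have "m - m' = 0" using l2inner_self_zero L by blast
  then show "m' = m" by simp
qed



lemma span_L2: "B \<subseteq> L2 \<Longrightarrow> cspan B \<subseteq> L2"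
  by (rule cs.span_minimal[OF _ L2_subspace])

definition is_proj :: "(int \<Rightarrow> complex^'n) set \<Rightarrow> ((int \<Rightarrow> complex^'n) \<Rightarrow> (int \<Rightarrow> complex^'n)) \<Rightarrow> bool" where
  "is_proj S p \<longleftrightarrow> (\<forall>f\<in>L2. p f \<in> S \<and> (\<forall>y\<in>S. l2inner (f - p f) y = 0))"

lemma proj_exists:
  fixes B :: "(int \<Rightarrow> complex^'n) set"
  assumes "finite B" "B \<subseteq> L2"
  shows "\<exists>p. is_proj (cspan B) p"
  using assms
proof (induction B rule: finite_induct)
  case empty
  show ?case by (rule exI[of _ "\<lambda>f. 0"]) (simp add: is_proj_def fun_eq_iff)
next
  case (insert b B)
  from insert obtain p where p: "is_proj (cspan B) p" by auto
  have SL: "cspan B \<subseteq> L2" using insert span_L2 by auto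
  have SL': "cspan (insert b B) \<subseteq> L2" using insert(4) by (intro span_L2) auto
  have bL: "b \<in> L2" using insert by auto
  have pS: "p f \<in> cspan B" if "f \<in> L2" for f using p that by (auto simp: is_proj_def)
  have pO: "l2inner (f - p f) y = 0" if "f \<in> L2" "y \<in> cspan B" for f y
    using p that by (auto simp: is_proj_def)
  define r where "r = b - p b"
  have rL: "r \<in> L2" unfolding r_def using bL pS SL by (auto intro: L2_diff)
  have "p b \<in> cspan (insert b B)" using cs.span_mono[of B "insert b B"] pS bL by auto
  then have rS': "r \<in> cspan (insert b B)" unfolding r_def
    by (intro cs.span_diff[OF cs.span_base[of b]]) auto
  show ?case
  proof (cases "l2inner r r = 0")
    case True
    then have "r = 0" using l2inner_self_zero rL by blast
    then have "b = p b" unfolding r_def by simp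
    then have "b \<in> cspan B" using pS[OF bL] by metis
    then have "cspan (insert b B) = cspan B"
      by (intro order_antisym cs.span_minimal cs.span_mono) (auto intro: cs.span_superset[THEN subsetD])
    then show ?thesis using p by auto
  next
    case False
    define p' where "p' f = p f + cscale (l2inner (f - p f) r / l2inner r r) r" for f
    have "is_proj (cspan (insert b B)) p'"
      unfolding is_proj_def
    proof (intro ballI conjI)
      fix f :: "int \<Rightarrow> complex^'n" assume fL: "f \<in> L2"
      show "p' f \<in> cspan (insert b B)" unfolding p'_def
        using cs.span_mono[of B "insert b B"] pS[OF fL] rS'
        by (intro cs.span_add cs.span_scale) auto
      fix y assume y: "y \<in> cspan (insert b B)"
      then obtain k where k: "y - cscale k b \<in> cspan B"
        using cs.span_insert by blast
      define s' where "s' = (y - cscale k b) + cscale k (p b)"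
      have s'S: "s' \<in> cspan B" unfolding s'_def using k pS bL
        by (intro cs.span_add cs.span_scale) auto
      have s'L: "s' \<in> L2" using s'S SL by auto
      have yeq: "y = cscale k r + s'"
        unfolding s'_def r_def by (simp add: fun_eq_iff cscale_def algebra_simps vector_ssub_ldistrib)
      define u where "u = f - p f"
      define a where "a = l2inner u r / l2inner r r"
      have uL: "u \<in> L2" unfolding u_def using fL pS SL by (auto intro: L2_diff)
      have krL: "cscale k r \<in> L2" "cscale a r \<in> L2" using rL by (auto intro: L2_scale)
      have us': "l2inner u s' = 0" unfolding u_def using pO fL s'S by auto
      have rs': "l2inner r s' = 0" unfolding r_def using pO bL s'S by auto
      have "f - p' f = u - cscale a r" unfolding p'_def u_def a_def by (simp add: algebra_simps)
      then have "l2inner (f - p' f) y = l2inner u y - a * l2inner r y"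
        using l2inner_diff_left[OF uL krL(2), of y] l2inner_scale_left[of a r y]
          yeq krL s'L by (simp add: L2_add)
      also have "l2inner u y = cnj k * l2inner u r"
        using yeq l2inner_add_right[OF krL(1) s'L uL] us' l2inner_scale_right by simp
      also have "l2inner r y = cnj k * l2inner r r"
        using yeq l2inner_add_right[OF krL(1) s'L rL] rs' l2inner_scale_right by simp
      finally have X: "l2inner (f - p' f) y = cnj k * l2inner u r - a * (cnj k * l2inner r r)" .
      have "cnj k * l2inner u r - a * (cnj k * l2inner r r) = 0"
        using False unfolding a_def by (simp add: field_simps)
      with X show "l2inner (f - p' f) y = 0" by (simp only:)
    qed
    then show ?thesis by blast
  qed
qed



lemma bij_plus1: "bij_betw (\<lambda>j::int. j + 1) UNIV UNIV"
  by (rule bij_betwI[of _ _ _ "\<lambda>j. j - 1"]) auto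

lemma infsum_shift1: "infsum F (UNIV::int set) = infsum (\<lambda>j. F (j + 1)) UNIV"
  using infsum_reindex_bij_betw[OF bij_plus1, of F] by simp

lemma summable_shift1: "F summable_on (UNIV::int set) \<longleftrightarrow> (\<lambda>j. F (j + 1)) summable_on UNIV"
  using summable_on_reindex_bij_betw[OF bij_plus1, of F] by simp

lemma H2_diff: "f \<in> H2 \<Longrightarrow> g \<in> H2 \<Longrightarrow> f - g \<in> H2"
  by (auto simp: H2_def intro: L2_diff)

lemma H2_L2: "f \<in> H2 \<Longrightarrow> f \<in> L2"
  by (simp add: H2_def)

lemma shiftS_H2: assumes "f \<in> H2" shows "shiftS f \<in> H2"
proof -
  have "(\<lambda>k. (norm (f k))\<^sup>2) summable_on UNIV" using assms by (simp add: H2_def L2_def)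
  then have "(\<lambda>k. (norm (f (k - 1)))\<^sup>2) summable_on UNIV"
    by (subst summable_shift1) simp
  then show ?thesis using assms by (auto simp: H2_def L2_def shiftS_def)
qed

lemma l2inner_shift:
  assumes "f \<in> H2"
  shows "l2inner (shiftS f) m = l2inner f (shiftS_adj m)"
proof -
  have "l2inner (shiftS f) m = infsum (\<lambda>j. vinner (f j) (m (j + 1))) UNIV"
    unfolding l2inner_def shiftS_def by (subst infsum_shift1) simp
  also have "\<dots> = l2inner f (shiftS_adj m)"
    unfolding l2inner_def shiftS_adj_def
    using assms by (intro infsum_cong) (auto simp: H2_def)
  finally show ?thesis .
qed

lemma mult_op_shift: "mult_op G (shiftS f) = multV (mult_op G f)"
proof
  fix m
  have "mult_op G (shiftS f) m = infsum (\<lambda>j. fourier_coeff G (m - (j + 1)) *v f j) UNIV"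
    unfolding mult_op_def shiftS_def by (subst infsum_shift1) simp
  also have "\<dots> = multV (mult_op G f) m"
    unfolding multV_def mult_op_def by (simp add: algebra_simps)
  finally show "mult_op G (shiftS f) m = multV (mult_op G f) m" .
qed

lemma hankel_shift: "hankel G (shiftS f) = Vminus (hankel G f)"
  unfolding hankel_def Vminus_def mult_op_shift
  by (auto simp: Pminus_def multV_def fun_eq_iff)

lemma l2inner_zero_left [simp]: "l2inner 0 f = 0"
  by (simp add: l2inner_def)

lemma eig_bound:
  fixes x :: "int \<Rightarrow> complex^'n"
  assumes xL: "x \<in> L2" and x0: "\<forall>k\<ge>0. x k = 0" and nz: "x \<noteq> 0"
    and eig: "Vminus x = cscale c x"
  shows "cmod c \<le> 1"
proof (rule ccontr)
  assume "\<not> cmod c \<le> 1"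
  then have c1: "cmod c > 1" by simp
  obtain k0 where "x k0 \<noteq> 0" using nz by (auto simp: fun_eq_iff)
  then have k0: "k0 < 0" "x k0 \<noteq> 0" using x0 by (auto simp: not_le[symmetric])
  have rec: "x (k - 1) = c *s x k" if "k < 0" for k
    using fun_cong[OF eig, of k] that by (simp add: Vminus_def Pminus_def multV_def cscale_def)
  have pw: "x (k0 - int j) = (c ^ j) *s x k0" for j
  proof (induction j)
    case 0 then show ?case by simp
  next
    case (Suc j)
    have "x (k0 - int (Suc j)) = x ((k0 - int j) - 1)" by (simp add: algebra_simps)
    also have "\<dots> = c *s x (k0 - int j)" using k0 by (intro rec) simp
    finally show ?case using Suc by (simp add: vector_smult_assoc)
  qed
  define d where "d = (norm (x k0))\<^sup>2"
  have d: "d > 0" using k0 by (simp add: d_def)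
  have nsq: "(norm (c *s v))\<^sup>2 = (cmod c)\<^sup>2 * (norm v)\<^sup>2" for c and v :: "complex^'n"
    by (simp add: normsq_vec norm_mult power_mult_distrib sum_distrib_left)
  have ge: "(norm (x (k0 - int j)))\<^sup>2 \<ge> d" for j
  proof -
    have "1 \<le> (cmod c ^ j)\<^sup>2" using c1 by (simp add: one_le_power)
    then have "1 * d \<le> (cmod c ^ j)\<^sup>2 * d" using d by (intro mult_right_mono) auto
    then show ?thesis using pw[of j] nsq[of "c ^ j" "x k0"] by (simp add: d_def norm_power)
  qed
  have s: "(\<lambda>k. (norm (x k))\<^sup>2) summable_on UNIV" using xL by (simp add: L2_def)
  define I where "I = infsum (\<lambda>k. (norm (x k))\<^sup>2) UNIV"
  obtain N :: nat where N: "I / d < real N" using reals_Archimedean2 by blast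
  have inj: "inj (\<lambda>j::nat. k0 - int j)" by (auto simp: inj_def)
  have "real N * d \<le> (\<Sum>j<N. (norm (x (k0 - int j)))\<^sup>2)"
    using sum_bounded_below[of "{..<N}" d "\<lambda>j. (norm (x (k0 - int j)))\<^sup>2"] ge by simp
  also have "\<dots> = (\<Sum>k\<in>(\<lambda>j. k0 - int j) ` {..<N}. (norm (x k))\<^sup>2)"
    using inj by (simp add: sum.reindex inj_on_def)
  also have "\<dots> \<le> I" unfolding I_def by (rule finite_sum_le_infsum[OF s]) auto
  finally show False using N d by (simp add: field_simps)
qed



abbreviation "Mc \<equiv> restrict_space lborel {0..2*pi::real}"

lemma Mc_sets: "{0..2*pi::real} \<inter> space lborel \<in> sets lborel" by simp

lemma space_Mc: "space Mc = {0..2*pi}" by (simp add: space_restrict_space)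

lemma fin_Mc: "finite_measure Mc"
  by (rule finite_measureI) (simp add: space_Mc emeasure_restrict_space)

lemma meas_id: "(\<lambda>t. t) \<in> borel_measurable Mc"
  by (rule measurable_restrict_space1) simp

definition ee :: "int \<Rightarrow> real \<Rightarrow> complex" where
  "ee k t = cis (of_int k * t)"

lemma meas_ee: "ee k \<in> borel_measurable Mc"
proof -
  have "(\<lambda>t. cis (of_int k * t)) \<in> borel_measurable Mc"
    by (rule borel_measurable_continuous_on[OF _ meas_id]) (intro continuous_intros)
  then show ?thesis by (simp add: ee_def[abs_def])
qed

lemma ee_mult: "ee a t * ee b t = ee (a + b) t"
  by (simp add: ee_def cis_mult algebra_simps)

lemma ee_cnj: "cnj (ee a t) = ee (- a) t"
  by (simp add: ee_def cis_cnj)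

lemma ee_norm [simp]: "cmod (ee a t) = 1"
  by (simp add: ee_def)

lemma ee_0 [simp]: "ee 0 t = 1"
  by (simp add: ee_def)

definition bm :: "(real \<Rightarrow> complex) \<Rightarrow> bool" where
  "bm a \<longleftrightarrow> a \<in> borel_measurable Mc \<and> (\<exists>B. AE t in Mc. cmod (a t) \<le> B)"

lemma bm_integrable: "bm a \<Longrightarrow> integrable Mc a"
  unfolding bm_def using finite_measure.integrable_const_bound[OF fin_Mc] by auto

lemma bm_ee: "bm (ee k)"
  unfolding bm_def using meas_ee by auto

lemma bm_const: "bm (\<lambda>t. c)"
  unfolding bm_def by auto

lemma bm_add: assumes "bm a" "bm b" shows "bm (\<lambda>t. a t + b t)"
proof -
  obtain A B where A: "AE t in Mc. cmod (a t) \<le> A" and B: "AE t in Mc. cmod (b t) \<le> B"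
    using assms by (auto simp: bm_def)
  have "AE t in Mc. cmod (a t + b t) \<le> A + B"
    using A B by eventually_elim (meson add_mono norm_triangle_ineq order_trans)
  then show ?thesis using assms unfolding bm_def by auto
qed

lemma bm_mult: assumes "bm a" "bm b" shows "bm (\<lambda>t. a t * b t)"
proof -
  obtain A B where A: "AE t in Mc. cmod (a t) \<le> A" and B: "AE t in Mc. cmod (b t) \<le> B"
    using assms by (auto simp: bm_def)
  have "AE t in Mc. cmod (a t * b t) \<le> A * B"
    using A B by eventually_elim (simp add: norm_mult mult_mono order_trans[OF norm_ge_zero])
  then show ?thesis using assms unfolding bm_def by auto
qed

lemma bm_cnj: assumes "bm a" shows "bm (\<lambda>t. cnj (a t))"
proof -
  have "(\<lambda>t. cnj (a t)) \<in> borel_measurable Mc"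
    using assms unfolding bm_def
    by (intro borel_measurable_continuous_on[where f=cnj]) (auto intro: continuous_intros)
  then show ?thesis using assms unfolding bm_def by auto
qed

lemma bm_minus: assumes "bm a" shows "bm (\<lambda>t. - a t)"
  using assms unfolding bm_def by auto

lemma bm_diff: assumes "bm a" "bm b" shows "bm (\<lambda>t. a t - b t)"
  using bm_add[OF assms(1) bm_minus[OF assms(2)]] by simp

lemma bm_sum: assumes "\<And>i. i \<in> I \<Longrightarrow> bm (a i)" shows "bm (\<lambda>t. \<Sum>i\<in>I. a i t)"
  using assms
proof (induction I rule: infinite_finite_induct)
  case (infinite I) then show ?case by (simp add: bm_const)
next
  case empty then show ?case by (simp add: bm_const)
next
  case (insert x F) then show ?case by (simp add: bm_add)
qed

lemma LINT_HK:
  fixes f :: "real \<Rightarrow> complex"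
  assumes "integrable Mc f"
  shows "integral\<^sup>L Mc f = integral {0..2*pi} f"
proof -
  have si: "set_integrable lborel {0..2*pi} f"
    using assms integrable_restrict_space[OF Mc_sets, of f] unfolding set_integrable_def by blast
  have "integral\<^sup>L Mc f = set_lebesgue_integral lborel {0..2*pi} f"
    by (simp add: integral_restrict_space[OF Mc_sets] set_lebesgue_integral_def)
  also have "\<dots> = integral {0..2*pi} f" by (rule set_borel_integral_eq_integral(2)[OF si])
  finally show ?thesis .
qed

lemma HK_ee: "integral {0..2*pi} (ee k) = (if k = 0 then 2*pi else 0)"
proof (cases "k = 0")
  case True then show ?thesis by (simp add: ee_def[abs_def] scaleR_conv_of_real)
next
  case False
  have "((\<lambda>t. cis (of_int k * t)) has_integral
      ((- \<i> * cis (of_int k * (2*pi)) / of_int k) - (- \<i> * cis (of_int k * 0) / of_int k))) {0..2*pi}"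
  proof (rule fundamental_theorem_of_calculus)
    show "((\<lambda>t. - \<i> * cis (of_int k * t) / of_int k) has_vector_derivative cis (of_int k * x)) (at x within {0..2*pi})"
      for x
      using False unfolding has_vector_derivative_def
      by (auto intro!: derivative_eq_intros simp: fun_eq_iff scaleR_conv_of_real field_simps)
  qed auto
  moreover have "cis (of_int k * (2*pi)) = 1"
    by (metis cis_multiple_2pi mult.commute Ints_of_int)
  ultimately have "(ee k has_integral 0) {0..2*pi}" by (simp add: ee_def[abs_def])
  then show ?thesis using False by (simp add: integral_unique)
qed

lemma int_ee: "integral\<^sup>L Mc (ee k) = (if k = 0 then 2*pi else 0)"
  using LINT_HK[OF bm_integrable[OF bm_ee]] HK_ee by simp

lemma int_ee_mult: "integral\<^sup>L Mc (\<lambda>t. ee a t * cnj (ee b t)) = (if a = b then 2*pi else 0)"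
  using int_ee[of "a - b"] by (simp add: ee_cnj ee_mult)

definition fc :: "(real \<Rightarrow> complex) \<Rightarrow> int \<Rightarrow> complex" where
  "fc a m = integral\<^sup>L Mc (\<lambda>t. ee (- m) t * a t) / (2 * pi)"

lemma trig_inner:
  assumes "finite F"
  shows "integral\<^sup>L Mc (\<lambda>t. (\<Sum>n\<in>F. b n * ee n t) * cnj (\<Sum>m\<in>F. d m * ee m t))
         = 2 * pi * (\<Sum>n\<in>F. b n * cnj (d n))"
proof -
  have eq: "(\<Sum>n\<in>F. b n * ee n t) * cnj (\<Sum>m\<in>F. d m * ee m t)
       = (\<Sum>n\<in>F. \<Sum>m\<in>F. (b n * cnj (d m)) * (ee n t * cnj (ee m t)))" for t
    by (simp add: sum_product cnj_sum algebra_simps)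
  have "integral\<^sup>L Mc (\<lambda>t. (\<Sum>n\<in>F. b n * ee n t) * cnj (\<Sum>m\<in>F. d m * ee m t))
      = (\<Sum>n\<in>F. \<Sum>m\<in>F. (b n * cnj (d m)) * integral\<^sup>L Mc (\<lambda>t. ee n t * cnj (ee m t)))"
    unfolding eq
    apply (subst Bochner_Integration.integral_sum)
     apply (rule bm_integrable, intro bm_sum bm_mult bm_const bm_ee bm_cnj)
    apply (subst Bochner_Integration.integral_sum)
     apply (rule bm_integrable, intro bm_mult bm_const bm_ee bm_cnj)
    apply (simp only: integral_mult_right_zero)
    done
  also have "\<dots> = (\<Sum>n\<in>F. (b n * cnj (d n)) * (2 * pi))"
    unfolding int_ee_mult using assms by (simp add: if_distrib sum.delta cong: if_cong)
  finally show ?thesis by (simp add: sum_distrib_left algebra_simps)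
qed

lemma inner_fc:
  assumes "bm a" "finite F"
  shows "integral\<^sup>L Mc (\<lambda>t. a t * cnj (\<Sum>m\<in>F. d m * ee m t))
         = 2 * pi * (\<Sum>m\<in>F. fc a m * cnj (d m))"
proof -
  have eq: "a t * cnj (\<Sum>m\<in>F. d m * ee m t) = (\<Sum>m\<in>F. cnj (d m) * (ee (- m) t * a t))" for t
    by (simp add: cnj_sum sum_distrib_left ee_cnj algebra_simps)
  have "integral\<^sup>L Mc (\<lambda>t. a t * cnj (\<Sum>m\<in>F. d m * ee m t))
      = (\<Sum>m\<in>F. cnj (d m) * integral\<^sup>L Mc (\<lambda>t. ee (- m) t * a t))"
    unfolding eq
    apply (subst Bochner_Integration.integral_sum)
     apply (rule bm_integrable, intro bm_mult bm_const bm_ee assms(1))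
    apply (simp only: integral_mult_right_zero)
    done
  also have "\<dots> = (\<Sum>m\<in>F. 2 * pi * (fc a m * cnj (d m)))"
    by (simp add: fc_def mult.commute)
  finally show ?thesis by (simp add: sum_distrib_left)
qed

lemma int_sq: "integral\<^sup>L Mc (\<lambda>t. x t * cnj (x t)) = complex_of_real (integral\<^sup>L Mc (\<lambda>t. (cmod (x t))\<^sup>2))"
  by (simp only: complex_norm_square[symmetric] integral_complex_of_real)

lemma bessel:
  assumes a: "bm a" and F: "finite F"
  shows "(\<Sum>m\<in>F. (cmod (fc a m))\<^sup>2) \<le> integral\<^sup>L Mc (\<lambda>t. (cmod (a t))\<^sup>2) / (2 * pi)"
proof -
  define P where "P t = (\<Sum>m\<in>F. fc a m * ee m t)" for t
  define R where "R = (\<Sum>m\<in>F. (cmod (fc a m))\<^sup>2)"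
  have S: "(\<Sum>m\<in>F. fc a m * cnj (fc a m)) = complex_of_real R"
    unfolding R_def of_real_sum by (simp only: complex_norm_square)
  have bP: "bm P" unfolding P_def[abs_def] by (intro bm_sum bm_mult bm_const bm_ee)
  have I2: "integral\<^sup>L Mc (\<lambda>t. a t * cnj (P t)) = 2 * pi * complex_of_real R"
    unfolding P_def using inner_fc[OF a F] S by simp
  have I3: "integral\<^sup>L Mc (\<lambda>t. P t * cnj (a t)) = 2 * pi * complex_of_real R"
  proof -
    have "integral\<^sup>L Mc (\<lambda>t. P t * cnj (a t)) = cnj (integral\<^sup>L Mc (\<lambda>t. a t * cnj (P t)))"
      by (simp only: Bochner_Integration.integral_cnj[symmetric] complex_cnj_mult complex_cnj_cnj mult.commute)
    then show ?thesis using I2 by simp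
  qed
  have I4: "integral\<^sup>L Mc (\<lambda>t. P t * cnj (P t)) = 2 * pi * complex_of_real R"
    unfolding P_def using trig_inner[OF F, of "fc a" "fc a"] S by simp
  have ex: "(a t - P t) * cnj (a t - P t) = ((a t * cnj (a t) - a t * cnj (P t)) - P t * cnj (a t)) + P t * cnj (P t)" for t
    by (simp add: algebra_simps)
  have ints: "integrable Mc (\<lambda>t. a t * cnj (a t))" "integrable Mc (\<lambda>t. a t * cnj (P t))"
    "integrable Mc (\<lambda>t. P t * cnj (a t))" "integrable Mc (\<lambda>t. P t * cnj (P t))"
    by (intro bm_integrable bm_mult bm_cnj a bP)+
  have "integral\<^sup>L Mc (\<lambda>t. (a t - P t) * cnj (a t - P t))
      = integral\<^sup>L Mc (\<lambda>t. a t * cnj (a t)) - 2 * pi * complex_of_real R"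
    unfolding ex using ints I2 I3 I4 by simp
  then have "complex_of_real (integral\<^sup>L Mc (\<lambda>t. (cmod (a t - P t))\<^sup>2))
      = complex_of_real (integral\<^sup>L Mc (\<lambda>t. (cmod (a t))\<^sup>2) - 2 * pi * R)"
    unfolding int_sq by simp
  then have eqr: "integral\<^sup>L Mc (\<lambda>t. (cmod (a t - P t))\<^sup>2) = integral\<^sup>L Mc (\<lambda>t. (cmod (a t))\<^sup>2) - 2 * pi * R"
    using of_real_eq_iff by blast
  have "0 \<le> integral\<^sup>L Mc (\<lambda>t. (cmod (a t - P t))\<^sup>2)" by (rule integral_nonneg_AE) simp
  then have "2 * pi * R \<le> integral\<^sup>L Mc (\<lambda>t. (cmod (a t))\<^sup>2)" using eqr by simp
  then show ?thesis unfolding R_def by (simp add: field_simps)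
qed



lemma normsq_gen: "(norm (x :: 'a::real_normed_vector^'n))\<^sup>2 = (\<Sum>i\<in>UNIV. (norm (x $ i))\<^sup>2)"
  by (simp add: norm_vec_def L2_set_def sum_nonneg)

lemma normsq_mat: "(norm (A :: complex^'p^'q))\<^sup>2 = (\<Sum>i\<in>UNIV. \<Sum>j\<in>UNIV. (cmod (A $ i $ j))\<^sup>2)"
  by (simp add: normsq_gen normsq_vec)

lemma mv_comp: "((A :: complex^'p^'q) *v x) $ i = (\<Sum>j\<in>UNIV. A $ i $ j * x $ j)"
  by (simp add: matrix_vector_mult_def)

lemma mv_norm:
  "norm ((A :: complex^'p^'q) *v x) \<le> real CARD('q) * (real CARD('p) * (norm A * norm x))"
proof -
  have c: "cmod ((A *v x) $ i) \<le> real CARD('p) * (norm A * norm x)" for i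
  proof -
    have "cmod ((A *v x) $ i) \<le> (\<Sum>j\<in>UNIV. cmod (A $ i $ j) * cmod (x $ j))"
      unfolding mv_comp by (rule order_trans[OF norm_sum]) (simp add: norm_mult)
    also have "\<dots> \<le> (\<Sum>j\<in>(UNIV::'p set). norm A * norm x)"
    proof (rule sum_mono)
      fix j
      have "cmod (A $ i $ j) \<le> norm A"
        using Finite_Cartesian_Product.norm_nth_le[of "A $ i" j] Finite_Cartesian_Product.norm_nth_le[of A i]
        by linarith
      moreover have "cmod (x $ j) \<le> norm x" by (rule Finite_Cartesian_Product.norm_nth_le)
      ultimately show "cmod (A $ i $ j) * cmod (x $ j) \<le> norm A * norm x"
        by (intro mult_mono) auto
    qed
    finally show ?thesis by simp
  qed
  have "norm (A *v x) \<le> (\<Sum>i\<in>UNIV. cmod ((A *v x) $ i))"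
    unfolding norm_vec_def by (rule L2_set_le_sum) auto
  also have "\<dots> \<le> (\<Sum>i\<in>(UNIV::'q set). real CARD('p) * (norm A * norm x))"
    by (rule sum_mono) (rule c)
  finally show ?thesis by simp
qed

lemma Linf_meas: "Linf G \<Longrightarrow> G \<in> borel_measurable Mc"
  unfolding Linf_def set_borel_measurable_def
  using borel_measurable_restrict_space_iff[OF Mc_sets] by blast

lemma Linf_bound:
  assumes "Linf G" obtains C where "AE t in Mc. norm (G t) \<le> C"
proof -
  from assms obtain C where "AE t in lborel. t \<in> {0..2*pi} \<longrightarrow> norm (G t) \<le> C"
    unfolding Linf_def by blast
  then have "AE t in Mc. norm (G t) \<le> C"
    using AE_restrict_space_iff[OF Mc_sets] by blast
  then show ?thesis using that by blast
qed

lemma bm_G: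
  fixes G :: "real \<Rightarrow> complex^'p^'q"
  assumes "Linf G" shows "bm (\<lambda>t. G t $ i $ j)"
proof -
  obtain C where C: "AE t in Mc. norm (G t) \<le> C" using Linf_bound[OF assms] by blast
  have "AE t in Mc. cmod (G t $ i $ j) \<le> C"
    using C
  proof eventually_elim
    fix t assume "norm (G t) \<le> C"
    then show "cmod (G t $ i $ j) \<le> C"
      using Finite_Cartesian_Product.norm_nth_le[of "G t $ i" j] Finite_Cartesian_Product.norm_nth_le[of "G t" i]
      by linarith
  qed
  moreover have "(\<lambda>t. G t $ i $ j) \<in> borel_measurable Mc"
    by (rule borel_measurable_continuous_on[where f="\<lambda>A. A $ i $ j", OF _ Linf_meas[OF assms]])
       (intro continuous_intros)
  ultimately show ?thesis unfolding bm_def by blast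
qed

lemma fcG:
  fixes G :: "real \<Rightarrow> complex^'p^'q"
  assumes "Linf G"
  shows "fourier_coeff G n $ i $ j = fc (\<lambda>t. G t $ i $ j) n"
proof -
  have "integral\<^sup>L Mc (\<lambda>t. ee (- n) t * G t $ i $ j) = integral {0..2*pi} (\<lambda>t. ee (- n) t * G t $ i $ j)"
    by (rule LINT_HK, rule bm_integrable, intro bm_mult bm_ee bm_G assms)
  then show ?thesis
    by (simp add: fourier_coeff_def fc_def ee_def)
qed

lemma coef_l2:
  fixes G :: "real \<Rightarrow> complex^'p^'q"
  assumes G: "Linf G"
  shows "(\<lambda>n. (norm (fourier_coeff G n))\<^sup>2) summable_on UNIV"
proof (rule nonneg_bdd_above_summable_on)
  define Bd where "Bd = (\<Sum>i\<in>(UNIV::'q set). \<Sum>j\<in>(UNIV::'p set).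
       integral\<^sup>L Mc (\<lambda>t. (cmod (G t $ i $ j))\<^sup>2) / (2 * pi))"
  show "bdd_above (sum (\<lambda>n. (norm (fourier_coeff G n))\<^sup>2) ` {F. F \<subseteq> UNIV \<and> finite F})"
  proof (rule bdd_aboveI[of _ Bd])
    fix y assume "y \<in> sum (\<lambda>n. (norm (fourier_coeff G n))\<^sup>2) ` {F. F \<subseteq> UNIV \<and> finite F}"
    then obtain F where F: "finite F" and y: "y = (\<Sum>n\<in>F. (norm (fourier_coeff G n))\<^sup>2)" by auto
    have "y = (\<Sum>i\<in>UNIV. \<Sum>j\<in>UNIV. \<Sum>n\<in>F. (cmod (fc (\<lambda>t. G t $ i $ j) n))\<^sup>2)"
      unfolding y normsq_mat fcG[OF G]
      by (subst sum.swap) (subst (2) sum.swap, simp)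
    also have "\<dots> \<le> Bd" unfolding Bd_def
      by (intro sum_mono bessel bm_G G F)
    finally show "y \<le> Bd" .
  qed
qed simp

lemma conv_summable:
  fixes G :: "real \<Rightarrow> complex^'p^'q"
  assumes G: "Linf G" and f: "f \<in> L2"
  shows "(\<lambda>n. fourier_coeff G (m - n) *v f n) summable_on UNIV"
proof -
  define K where "K = real CARD('q) * real CARD('p)"
  have bij: "bij_betw (\<lambda>n::int. m - n) UNIV UNIV"
    by (rule bij_betwI[of _ _ _ "\<lambda>n. m - n"]) auto
  have s1: "(\<lambda>n. (norm (fourier_coeff G (m - n)))\<^sup>2) summable_on UNIV"
    using summable_on_reindex_bij_betw[OF bij, of "\<lambda>n. (norm (fourier_coeff G n))\<^sup>2"] coef_l2[OF G]
    by simp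
  have s2: "(\<lambda>n. (norm (f n))\<^sup>2) summable_on UNIV" using f by (simp add: L2_def)
  have s: "(\<lambda>n. K * (((norm (fourier_coeff G (m - n)))\<^sup>2 + (norm (f n))\<^sup>2) / 2)) summable_on UNIV"
    unfolding divide_inverse
    by (intro summable_on_cmult_right summable_on_cmult_left summable_on_add s1 s2)
  have b: "norm (fourier_coeff G (m - n) *v f n) \<le> K * (((norm (fourier_coeff G (m - n)))\<^sup>2 + (norm (f n))\<^sup>2) / 2)" for n
  proof -
    have "norm (fourier_coeff G (m - n) *v f n) \<le> K * (norm (fourier_coeff G (m - n)) * norm (f n))"
      using mv_norm[of "fourier_coeff G (m - n)" "f n"] unfolding K_def by (simp add: mult.assoc)
    also have "\<dots> \<le> K * (((norm (fourier_coeff G (m - n)))\<^sup>2 + (norm (f n))\<^sup>2) / 2)"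
    proof (rule mult_left_mono)
      have "0 \<le> (norm (fourier_coeff G (m - n)) - norm (f n))\<^sup>2" by simp
      then show "norm (fourier_coeff G (m - n)) * norm (f n) \<le> ((norm (fourier_coeff G (m - n)))\<^sup>2 + (norm (f n))\<^sup>2) / 2"
        by (simp add: power2_eq_square algebra_simps)
    qed (simp add: K_def)
    finally show ?thesis .
  qed
  have "(\<lambda>n. norm (fourier_coeff G (m - n) *v f n)) summable_on UNIV"
    by (rule Infinite_Sum.abs_summable_on_comparison_test'[OF s]) (rule b)
  then show ?thesis by (rule abs_summable_summable)
qed

lemma hankel_diff:
  fixes G :: "real \<Rightarrow> complex^'p^'q"
  assumes G: "Linf G" and f: "f \<in> L2" and g: "g \<in> L2"
  shows "hankel G (f - g) = hankel G f - hankel G g"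
proof -
  have "mult_op G (f - g) m = mult_op G f m - mult_op G g m" for m
  proof -
    have "mult_op G (f - g) m = infsum (\<lambda>n. fourier_coeff G (m - n) *v f n - fourier_coeff G (m - n) *v g n) UNIV"
      unfolding mult_op_def by (simp add: matrix_vector_mult_diff_distrib)
    also have "\<dots> = mult_op G f m - mult_op G g m"
      unfolding mult_op_def by (rule infsum_diff'[OF conv_summable[OF G f] conv_summable[OF G g]])
    finally show ?thesis .
  qed
  then show ?thesis by (simp add: hankel_def Pminus_def fun_eq_iff)
qed



lemma bm_sq_int: assumes "bm a" shows "integrable Mc (\<lambda>t. (cmod (a t))\<^sup>2)"
proof -
  obtain B where B: "AE t in Mc. cmod (a t) \<le> B" and m: "a \<in> borel_measurable Mc"
    using assms by (auto simp: bm_def)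
  have "AE t in Mc. norm ((cmod (a t))\<^sup>2) \<le> B\<^sup>2"
    using B by eventually_elim (simp add: power_mono)
  moreover have "(\<lambda>t. (cmod (a t))\<^sup>2) \<in> borel_measurable Mc"
    by (rule borel_measurable_continuous_on[where f="\<lambda>z. (cmod z)\<^sup>2", OF _ m]) (intro continuous_intros)
  ultimately show ?thesis by (rule finite_measure.integrable_const_bound[OF fin_Mc])
qed

lemma trig_sq:
  assumes "finite F"
  shows "integral\<^sup>L Mc (\<lambda>t. (cmod (\<Sum>n\<in>F. b n * ee n t))\<^sup>2) = 2 * pi * (\<Sum>n\<in>F. (cmod (b n))\<^sup>2)"
proof -
  have "complex_of_real (integral\<^sup>L Mc (\<lambda>t. (cmod (\<Sum>n\<in>F. b n * ee n t))\<^sup>2))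
      = 2 * pi * (\<Sum>n\<in>F. b n * cnj (b n))"
    using trig_inner[OF assms, of b b] unfolding int_sq by simp
  also have "\<dots> = complex_of_real (2 * pi * (\<Sum>n\<in>F. (cmod (b n))\<^sup>2))"
    unfolding of_real_mult of_real_sum by (simp only: complex_norm_square)
  finally show ?thesis using of_real_eq_iff by blast
qed

lemma lim_H:
  fixes h :: "int \<Rightarrow> 'b::banach"
  assumes s: "h summable_on UNIV" and z: "\<And>n. n < 0 \<Longrightarrow> h n = 0"
  shows "(\<lambda>N. \<Sum>n\<in>int ` {..<N}. h n) \<longlonglongrightarrow> infsum h UNIV"
proof -
  have ri: "x \<in> range int" if "x \<ge> 0" for x :: int
    using that by (metis nat_0_le rangeI)
  have e1: "infsum h UNIV = infsum h (range int)"
  proof (rule infsum_cong_neutral)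
    fix x assume "x \<in> UNIV - range int"
    then have "\<not> x \<ge> 0" using ri by blast
    then show "h x = 0" by (intro z) simp
  qed auto
  have s1: "h summable_on (range int)" using summable_on_subset_banach[OF s] by blast
  have e2: "infsum h (range int) = infsum (h \<circ> int) UNIV"
    by (rule infsum_reindex) simp
  have s2: "(h \<circ> int) summable_on UNIV"
    using s1 summable_on_reindex[of int UNIV h] by simp
  have "(h \<circ> int) sums infsum (h \<circ> int) UNIV"
    by (rule has_sum_imp_sums, rule has_sum_infsum[OF s2])
  then have "(\<lambda>N. \<Sum>k<N. h (int k)) \<longlonglongrightarrow> infsum h UNIV"
    unfolding sums_def e1 e2 by simp
  moreover have "(\<Sum>n\<in>int ` {..<N}. h n) = (\<Sum>k<N. h (int k))" for N
    by (simp add: sum.reindex)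
  ultimately show ?thesis by simp
qed

lemma coef_eq:
  fixes G :: "real \<Rightarrow> complex^'p^'q"
  assumes G: "Linf G" and T: "finite T"
  shows "fc (\<lambda>t. \<Sum>j\<in>UNIV. G t $ i $ j * (\<Sum>n\<in>T. f n $ j * ee n t)) m
       = (\<Sum>n\<in>T. fourier_coeff G (m - n) *v f n) $ i"
proof -
  have e: "ee (- (m - n)) t = ee (- m) t * ee n t" for n t by (simp add: ee_mult)
  have pw: "ee (- m) t * (\<Sum>j\<in>UNIV. G t $ i $ j * (\<Sum>n\<in>T. f n $ j * ee n t))
      = (\<Sum>j\<in>UNIV. \<Sum>n\<in>T. f n $ j * (ee (- (m - n)) t * G t $ i $ j))" for t
    unfolding e by (simp add: sum_distrib_left algebra_simps)
  have "integral\<^sup>L Mc (\<lambda>t. ee (- m) t * (\<Sum>j\<in>UNIV. G t $ i $ j * (\<Sum>n\<in>T. f n $ j * ee n t)))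
      = (\<Sum>j\<in>UNIV. \<Sum>n\<in>T. f n $ j * integral\<^sup>L Mc (\<lambda>t. ee (- (m - n)) t * G t $ i $ j))"
    unfolding pw
    apply (subst Bochner_Integration.integral_sum)
     apply (rule bm_integrable, intro bm_sum bm_mult bm_const bm_ee bm_G G)
    apply (subst Bochner_Integration.integral_sum)
     apply (rule bm_integrable, intro bm_mult bm_const bm_ee bm_G G)
    apply (simp only: integral_mult_right_zero)
    done
  also have "\<dots> = (\<Sum>j\<in>UNIV. \<Sum>n\<in>T. f n $ j * (2 * pi * fourier_coeff G (m - n) $ i $ j))"
    by (simp add: fcG[OF G] fc_def)
  finally have "fc (\<lambda>t. \<Sum>j\<in>UNIV. G t $ i $ j * (\<Sum>n\<in>T. f n $ j * ee n t)) m
      = (\<Sum>j\<in>UNIV. \<Sum>n\<in>T. f n $ j * fourier_coeff G (m - n) $ i $ j)"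
    by (simp add: fc_def sum_divide_distrib sum_distrib_left algebra_simps)
  also have "\<dots> = (\<Sum>n\<in>T. fourier_coeff G (m - n) *v f n) $ i"
    by (subst sum.swap) (simp add: mv_comp mult.commute)
  finally show ?thesis .
qed

lemma partial_bound:
  fixes G :: "real \<Rightarrow> complex^'p^'q"
  assumes G: "Linf G" and C: "AE t in Mc. norm (G t) \<le> C" and T: "finite T" and F: "finite F"
  shows "(\<Sum>m\<in>F. (norm (\<Sum>n\<in>T. fourier_coeff G (m - n) *v f n))\<^sup>2)
         \<le> (real CARD('q) * real CARD('p) * C)\<^sup>2 * (\<Sum>n\<in>T. (norm (f n))\<^sup>2)"
proof -
  define K where "K = real CARD('q) * real CARD('p)"
  define u where "u j t = (\<Sum>n\<in>T. f n $ j * ee n t)" for j t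
  define a where "a i t = (\<Sum>j\<in>UNIV. G t $ i $ j * u j t)" for i t
  define v where "v t = (\<chi> j. u j t)" for t
  have bu: "bm (u j)" for j unfolding u_def[abs_def] by (intro bm_sum bm_mult bm_const bm_ee)
  have ba: "bm (a i)" for i unfolding a_def[abs_def] by (intro bm_sum bm_mult bm_G G bu)
  have av: "a i t = (G t *v v t) $ i" for i t by (simp add: a_def v_def mv_comp)
  have "(\<Sum>m\<in>F. (norm (\<Sum>n\<in>T. fourier_coeff G (m - n) *v f n))\<^sup>2)
      = (\<Sum>i\<in>UNIV. \<Sum>m\<in>F. (cmod (fc (a i) m))\<^sup>2)"
    unfolding normsq_vec a_def u_def coef_eq[OF G T] by (rule sum.swap)
  also have "\<dots> \<le> (\<Sum>i\<in>UNIV. integral\<^sup>L Mc (\<lambda>t. (cmod (a i t))\<^sup>2) / (2 * pi))"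
    by (intro sum_mono bessel ba F)
  also have "\<dots> = integral\<^sup>L Mc (\<lambda>t. \<Sum>i\<in>UNIV. (cmod (a i t))\<^sup>2) / (2 * pi)"
    by (subst Bochner_Integration.integral_sum) (auto intro: bm_sq_int ba simp: sum_divide_distrib)
  also have "integral\<^sup>L Mc (\<lambda>t. \<Sum>i\<in>UNIV. (cmod (a i t))\<^sup>2)
      \<le> integral\<^sup>L Mc (\<lambda>t. (K * C)\<^sup>2 * (\<Sum>j\<in>UNIV. (cmod (u j t))\<^sup>2))"
  proof (rule integral_mono_AE)
    show "integrable Mc (\<lambda>t. \<Sum>i\<in>UNIV. (cmod (a i t))\<^sup>2)"
      by (intro Bochner_Integration.integrable_sum bm_sq_int ba)
    show "integrable Mc (\<lambda>t. (K * C)\<^sup>2 * (\<Sum>j\<in>UNIV. (cmod (u j t))\<^sup>2))"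
      by (intro integrable_mult_right Bochner_Integration.integrable_sum bm_sq_int bu)
    show "AE t in Mc. (\<Sum>i\<in>UNIV. (cmod (a i t))\<^sup>2) \<le> (K * C)\<^sup>2 * (\<Sum>j\<in>UNIV. (cmod (u j t))\<^sup>2)"
      using C
    proof eventually_elim
      fix t assume Ct: "norm (G t) \<le> C"
      have "(\<Sum>i\<in>UNIV. (cmod (a i t))\<^sup>2) = (norm (G t *v v t))\<^sup>2"
        unfolding normsq_vec av ..
      also have "\<dots> \<le> (K * (norm (G t) * norm (v t)))\<^sup>2"
        using mv_norm[of "G t" "v t"] unfolding K_def by (intro power_mono) (auto simp: mult.assoc)
      also have "\<dots> \<le> (K * (C * norm (v t)))\<^sup>2"
        using Ct by (intro power_mono mult_left_mono mult_right_mono) (auto simp: K_def)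
      also have "\<dots> = (K * C)\<^sup>2 * (\<Sum>j\<in>UNIV. (cmod (u j t))\<^sup>2)"
        by (simp add: power_mult_distrib normsq_vec v_def)
      finally show "(\<Sum>i\<in>UNIV. (cmod (a i t))\<^sup>2) \<le> (K * C)\<^sup>2 * (\<Sum>j\<in>UNIV. (cmod (u j t))\<^sup>2)" .
    qed
  qed
  also have "integral\<^sup>L Mc (\<lambda>t. (K * C)\<^sup>2 * (\<Sum>j\<in>UNIV. (cmod (u j t))\<^sup>2))
      = (K * C)\<^sup>2 * (\<Sum>j\<in>UNIV. 2 * pi * (\<Sum>n\<in>T. (cmod (f n $ j))\<^sup>2))"
    unfolding integral_mult_right_zero
    apply (subst Bochner_Integration.integral_sum)
     apply (rule bm_sq_int[OF bu])
    apply (simp add: u_def trig_sq[OF T])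
    done
  also have "\<dots> = 2 * pi * ((K * C)\<^sup>2 * (\<Sum>n\<in>T. (norm (f n))\<^sup>2))"
  proof -
    have sw: "(\<Sum>j\<in>UNIV. \<Sum>n\<in>T. (cmod (f n $ j))\<^sup>2) = (\<Sum>n\<in>T. \<Sum>j\<in>UNIV. (cmod (f n $ j))\<^sup>2)"
      by (rule sum.swap)
    show ?thesis unfolding normsq_vec sum_distrib_left[symmetric] sw by (simp add: algebra_simps)
  qed
  finally show ?thesis unfolding K_def by (simp add: divide_right_mono)
qed

lemma mult_op_L2:
  fixes G :: "real \<Rightarrow> complex^'p^'q"
  assumes G: "Linf G" and f: "f \<in> H2"
  shows "mult_op G f \<in> L2"
proof -
  obtain C where C: "AE t in Mc. norm (G t) \<le> C" using Linf_bound[OF G] by blast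
  define K where "K = real CARD('q) * real CARD('p)"
  have fL: "f \<in> L2" using f by (simp add: H2_def)
  have sf: "(\<lambda>k. (norm (f k))\<^sup>2) summable_on UNIV" using fL by (simp add: L2_def)
  define B where "B = (K * C)\<^sup>2 * infsum (\<lambda>k. (norm (f k))\<^sup>2) UNIV"
  have fz: "f n = 0" if "n < 0" for n using f that by (simp add: H2_def)
  have finB: "(\<Sum>m\<in>F. (norm (mult_op G f m))\<^sup>2) \<le> B" if F: "finite F" for F
  proof (rule LIMSEQ_le_const2)
    show "(\<lambda>N. \<Sum>m\<in>F. (norm (\<Sum>n\<in>int ` {..<N}. fourier_coeff G (m - n) *v f n))\<^sup>2)
        \<longlonglongrightarrow> (\<Sum>m\<in>F. (norm (mult_op G f m))\<^sup>2)"
      unfolding mult_op_def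
      by (intro tendsto_intros lim_H conv_summable[OF G fL]) (simp add: fz)
    show "\<exists>N. \<forall>n\<ge>N. (\<Sum>m\<in>F. (norm (\<Sum>n\<in>int ` {..<n}. fourier_coeff G (m - n) *v f n))\<^sup>2) \<le> B"
    proof (intro exI allI impI)
      fix N :: nat
      have "(\<Sum>m\<in>F. (norm (\<Sum>n\<in>int ` {..<N}. fourier_coeff G (m - n) *v f n))\<^sup>2)
          \<le> (K * C)\<^sup>2 * (\<Sum>n\<in>int ` {..<N}. (norm (f n))\<^sup>2)"
        unfolding K_def by (rule partial_bound[OF G C _ F]) simp
      also have "\<dots> \<le> B" unfolding B_def
        by (intro mult_left_mono finite_sum_le_infsum[OF sf]) auto
      finally show "(\<Sum>m\<in>F. (norm (\<Sum>n\<in>int ` {..<N}. fourier_coeff G (m - n) *v f n))\<^sup>2) \<le> B" .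
    qed
  qed
  have "(\<lambda>m. (norm (mult_op G f m))\<^sup>2) summable_on UNIV"
  proof (rule nonneg_bdd_above_summable_on)
    show "bdd_above (sum (\<lambda>m. (norm (mult_op G f m))\<^sup>2) ` {F. F \<subseteq> UNIV \<and> finite F})"
      by (rule bdd_aboveI[of _ B]) (auto intro: finB)
  qed simp
  then show ?thesis by (simp add: L2_def)
qed

lemma hankel_L2:
  fixes G :: "real \<Rightarrow> complex^'p^'q"
  assumes G: "Linf G" and f: "f \<in> H2"
  shows "hankel G f \<in> L2"
proof -
  have s: "(\<lambda>m. (norm (mult_op G f m))\<^sup>2) summable_on UNIV"
    using mult_op_L2[OF G f] by (simp add: L2_def)
  have "(\<lambda>m. (norm (hankel G f m))\<^sup>2) summable_on UNIV"
    by (rule summable_on_comparison_test[OF s]) (auto simp: hankel_def Pminus_def)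
  then show ?thesis by (simp add: L2_def)
qed


theorem lemma6p1:
  fixes G :: "real \<Rightarrow> complex^'p^'q"
    and M0 :: "(int \<Rightarrow> complex^'p) set"
  assumes G: "Linf G"
    and C1: "finite_rank G"
    and C2a: "\<forall>h. maximizing_vector G h \<longrightarrow> h \<notin> shiftS ` H2"
    and C2b: "cdim {h. maximizing_vector G h} = CARD('p)"
    and M0_sub: "csubspace M0" "M0 \<subseteq> H2"
    and M0_fin: "\<exists>B. finite B \<and> M0 = cspan B"
    and M0_inv: "shiftS_adj ` M0 \<subseteq> M0"
  defines "X \<equiv> hankel G ` H2"
    and "W \<equiv> hankel G"
    and "P0 \<equiv> orth_proj M0"
    and "X0 \<equiv> hankel G ` orth_compl_in H2 M0"
  defines "Z \<equiv> (\<lambda>x. if x \<in> X then Vminus x else undefined)"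
    and "Pi0 \<equiv> (\<lambda>x. if x \<in> X then orth_proj X0 x else undefined)"
  defines "Z0 \<equiv> (\<lambda>x. if x \<in> X0 then Z x else undefined)"
    and "W0 \<equiv> (\<lambda>f. Pi0 (W f))"
  shows "Z ` X0 \<subseteq> X0 \<and>
         spec_radius Z0 X0 \<le> spec_radius Z X \<and>
         (\<forall>k::nat. \<forall>f\<in>H2. (Z ^^ k) (W (f - P0 f)) = (Z0 ^^ k) (W0 (f - P0 f)))"
proof -
  define N where "N = orth_compl_in H2 M0"
  have NH: "N \<subseteq> H2" by (auto simp: N_def orth_compl_in_def)
  have M0L: "M0 \<subseteq> L2" using M0_sub(2) by (auto simp: H2_def)
  have Ndiff: "f - g \<in> N" if "f \<in> N" "g \<in> N" for f g
    using that M0L by (auto simp: N_def orth_compl_in_def H2_diff l2inner_diff_left H2_L2 subset_iff)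
  have Nshift: "shiftS f \<in> N" if "f \<in> N" for f
  proof -
    have fH: "f \<in> H2" using that NH by auto
    show ?thesis unfolding N_def orth_compl_in_def
    proof (intro CollectI conjI ballI)
      show "shiftS f \<in> H2" using fH by (rule shiftS_H2)
      fix m assume "m \<in> M0"
      then have "shiftS_adj m \<in> M0" using M0_inv by auto
      then show "l2inner (shiftS f) m = 0" using that l2inner_shift[OF fH]
        by (auto simp: N_def orth_compl_in_def)
    qed
  qed
  have X0N: "X0 = hankel G ` N" by (simp add: X0_def N_def)
  have X0X: "X0 \<subseteq> X" using NH by (auto simp: X0N X_def)
  have XL: "X \<subseteq> L2" using hankel_L2[OF G] by (auto simp: X_def)
  have X0Z: "Z x \<in> X0" if xx: "x \<in> X0" for x
  proof -
    obtain f where f: "f \<in> N" "x = hankel G f" using xx unfolding X0N by blast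
    have "Z x = hankel G (shiftS f)" using xx X0X f by (auto simp: Z_def hankel_shift)
    then show ?thesis using Nshift[OF f(1)] by (auto simp: X0N)
  qed
  have part1: "Z ` X0 \<subseteq> X0" using X0Z by auto
  have Z0Z: "Z0 x = Z x" if "x \<in> X0" for x using that by (simp add: Z0_def)
  have part2: "spec_radius Z0 X0 \<le> spec_radius Z X"
  proof -
    let ?Tz = "{cmod c | c. \<exists>x\<in>X0. x \<noteq> 0 \<and> Z0 x = cscale c x}"
    let ?S = "{cmod c | c. \<exists>x\<in>X. x \<noteq> 0 \<and> Z x = cscale c x}"
    have sub: "insert 0 ?Tz \<subseteq> insert 0 ?S"
    proof
      fix y assume "y \<in> insert 0 ?Tz"
      then consider "y = 0" | c x where "y = cmod c" "x \<in> X0" "x \<noteq> 0" "Z0 x = cscale c x" by blast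
      then show "y \<in> insert 0 ?S"
      proof cases
        case 2
        then have "x \<in> X" "Z x = cscale c x" using X0X Z0Z[OF 2(2)] by auto
        then show ?thesis using 2(1,3) by blast
      qed simp
    qed
    have bd: "bdd_above (insert 0 ?S)"
    proof (rule bdd_aboveI[of _ 1])
      fix y assume "y \<in> insert 0 ?S"
      then consider "y = 0" | c x where "y = cmod c" "x \<in> X" "x \<noteq> 0" "Z x = cscale c x" by blast
      then show "y \<le> 1"
      proof cases
        case 2
        from 2(2) obtain f where "f \<in> H2" "x = hankel G f" unfolding X_def by blast
        then have x0: "\<forall>k\<ge>0. x k = 0" by (simp add: hankel_def Pminus_def)
        have ev: "Vminus x = cscale c x" using 2(2,4) by (simp add: Z_def)
        have xL: "x \<in> L2" using XL 2(2) by blast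
        have "cmod c \<le> 1" by (rule eig_bound[OF xL x0 2(3) ev])
        with 2(1) show ?thesis by simp
      qed simp
    qed
    have e1: "spec_radius Z X = Sup (insert 0 ?S)" unfolding spec_radius_def by (rule refl)
    have e0: "spec_radius Z0 X0 = Sup (insert 0 ?Tz)" unfolding spec_radius_def by (rule refl)
    show ?thesis unfolding e0 e1 by (rule cSup_subset_mono[OF _ bd sub]) simp
  qed
  have part3: "(Z ^^ k) (W (f - P0 f)) = (Z0 ^^ k) (W0 (f - P0 f))" if fH: "f \<in> H2" for k f
  proof -
    obtain B where B: "finite B" "M0 = cspan B" using M0_fin by blast
    have BL: "B \<subseteq> L2" using B M0L cs.span_superset by blast
    obtain p where p: "is_proj M0 p" using proj_exists[OF B(1) BL] B by auto
    have fL: "f \<in> L2" using fH by (simp add: H2_def)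
    have pM: "p f \<in> M0" and pO: "\<forall>y\<in>M0. l2inner (f - p f) y = 0"
      using p fL by (auto simp: is_proj_def)
    have "P0 f = p f" unfolding P0_def
      by (rule orth_proj_eq[OF M0L _ fL pM pO]) (use B cs.span_diff in auto)
    then have gN: "f - P0 f \<in> N" using pM pO fH M0_sub(2)
      by (auto simp: N_def orth_compl_in_def H2_diff)
    define x where "x = W (f - P0 f)"
    have xX0: "x \<in> X0" using gN by (simp add: x_def W_def X0N)
    have X0L: "X0 \<subseteq> L2" using X0X XL by auto
    have X0diff: "a - b \<in> X0" if ab: "a \<in> X0" "b \<in> X0" for a b
    proof -
      obtain fa fb where fab: "fa \<in> N" "fb \<in> N" "a = hankel G fa" "b = hankel G fb"
        using ab unfolding X0N by blast
      have "fa \<in> H2" "fb \<in> H2" using NH fab by auto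
      then have "a - b = hankel G (fa - fb)" using hankel_diff[OF G H2_L2 H2_L2] fab by simp
      moreover have "fa - fb \<in> N" using Ndiff fab by blast
      ultimately show ?thesis unfolding X0N by blast
    qed
    have "orth_proj X0 x = x"
      by (rule orth_proj_eq[OF X0L X0diff]) (use xX0 X0L in auto)
    then have W0x: "W0 (f - P0 f) = x" using xX0 X0X by (auto simp: W0_def Pi0_def x_def)
    have "\<forall>y\<in>X0. (Z ^^ k) y = (Z0 ^^ k) y \<and> (Z ^^ k) y \<in> X0"
    proof (induction k)
      case 0 then show ?case by simp
    next
      case (Suc k)
      show ?case
      proof
        fix y assume y: "y \<in> X0"
        have a: "(Z ^^ k) y = (Z0 ^^ k) y" "(Z ^^ k) y \<in> X0" using Suc y by auto
        show "(Z ^^ Suc k) y = (Z0 ^^ Suc k) y \<and> (Z ^^ Suc k) y \<in> X0"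
          using a Z0Z[OF a(2)] X0Z[OF a(2)] by simp
      qed
    qed
    then show ?thesis using xX0 W0x by (simp add: x_def)
  qed
  show ?thesis using part1 part2 part3 by blast
qed


end
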